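(* Let $n\ge 2$, let $a_1,\dots,a_n$ be real numbers, and put $C(t)=\sum_{j=1}^n a_j\cos jt$, $S(t)=\sum_{j=1}^n a_j\sin jt$. Suppose $S(t_1)=0$ for some $t_1\in(0,\pi)$. Then there exist unique real numbers $a^{(1)}_1,\dots,a^{(1)}_{n-1}$ such that for all real $t$ $$S(t)=(\cos t-\cos t_1)\sum_{j=1}^{n-1}a^{(1)}_j\sin jt,\qquad C(t)=-\frac{a^{(1)}_1}{2}+(\cos t-\cos t_1)\sum_{j=1}^{n-1}a^{(1)}_j\cos jt .$$ *)

theory Defs
  imports "HOL-Analysis.Analysis"
begin

end

theory Submission
  imports Defs "HOL-Computational_Algebra.Polynomial"
begin

lemma sin_rec: "sin ((real m + 2) * t) + sin (real m * t) = 2 * cos t * sin ((real m + 1) * t)"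
proof -
  have "sin ((real m + 2) * t) = sin ((real m + 1) * t + t)" by (simp add: algebra_simps)
  moreover have "sin (real m * t) = sin ((real m + 1) * t - t)" by (simp add: algebra_simps)
  moreover have "sin (x + t) + sin (x - t) = 2 * cos t * sin x" for x
    by (simp add: sin_add sin_diff)
  ultimately show ?thesis by simp
qed

lemma cos_rec: "cos ((real m + 2) * t) + cos (real m * t) = 2 * cos t * cos ((real m + 1) * t)"
proof -
  have "cos ((real m + 2) * t) = cos ((real m + 1) * t + t)" by (simp add: algebra_simps)
  moreover have "cos (real m * t) = cos ((real m + 1) * t - t)" by (simp add: algebra_simps)
  moreover have "cos (x + t) + cos (x - t) = 2 * cos t * cos x" for x
    by (simp add: cos_add cos_diff)
  ultimately show ?thesis by simp
qed

lemma sin_expand: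
  fixes b :: "nat \<Rightarrow> real"
  shows "2 * (cos t - c) * (\<Sum>j=1..m. b j * sin (real j * t)) =
    (\<Sum>k=1..m. (b (k-1) + b (k+1) - 2*c*b k) * sin (real k * t))
    + b m * sin ((real m + 1) * t) - b (m+1) * sin (real m * t) - b 0 * sin t"
proof (induction m)
  case 0
  then show ?case by simp
next
  case (Suc m)
  have r: "sin ((real m + 2) * t) + sin (real m * t) = 2 * cos t * sin ((real m + 1) * t)"
    by (rule sin_rec)
  have e: "(real (Suc m) + 1) = real m + 2" "real (Suc m) = real m + 1" by simp_all
  define X where "X = sin ((real m + 1) * t)"
  define Y where "Y = sin ((real m + 2) * t)"
  define Z where "Z = sin (real m * t)"
  define S where "S = (\<Sum>j=1..m. b j * sin (real j * t))"
  define T where "T = (\<Sum>k=1..m. (b (k-1) + b (k+1) - 2*c*b k) * sin (real k * t))"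
  have A: "(\<Sum>j=1..Suc m. b j * sin (real j * t)) = S + b (Suc m) * X"
    unfolding S_def X_def by (simp add: e add.commute)
  have B: "(\<Sum>k=1..Suc m. (b (k-1) + b (k+1) - 2*c*b k) * sin (real k * t)) = T + (b m + b (m+2) - 2*c*b (m+1)) * X"
    unfolding T_def X_def by (simp add: e add.commute)
  have IH: "2 * (cos t - c) * S = T + b m * X - b (m+1) * Z - b 0 * sin t"
    using Suc.IH unfolding S_def T_def X_def Z_def by simp
  have r': "Y + Z = 2 * cos t * X" using r unfolding X_def Y_def Z_def .
  have G: "2 * (cos t - c) * (S + b (Suc m) * X) = T + (b m + b (m+2) - 2*c*b (m+1)) * X + b (Suc m) * Y - b (Suc m + 1) * X - b 0 * sin t"
  proof -
    have i: "m + 2 = Suc (Suc m)" "Suc m + 1 = Suc (Suc m)" "m + 1 = Suc m" by simp_all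
    show ?thesis using IH r' unfolding i by algebra
  qed
  show ?case unfolding A B using G unfolding Y_def X_def by (simp add: e add.commute)
qed

lemma cos_expand:
  fixes b :: "nat \<Rightarrow> real"
  shows "2 * (cos t - c) * (\<Sum>j=1..m. b j * cos (real j * t)) =
    (\<Sum>k=1..m. (b (k-1) + b (k+1) - 2*c*b k) * cos (real k * t))
    + b m * cos ((real m + 1) * t) - b (m+1) * cos (real m * t) + b 1 - b 0 * cos t"
proof (induction m)
  case 0
  then show ?case by simp
next
  case (Suc m)
  have r: "cos ((real m + 2) * t) + cos (real m * t) = 2 * cos t * cos ((real m + 1) * t)"
    by (rule cos_rec)
  have e: "(real (Suc m) + 1) = real m + 2" "real (Suc m) = real m + 1" by simp_all
  define X where "X = cos ((real m + 1) * t)"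
  define Y where "Y = cos ((real m + 2) * t)"
  define Z where "Z = cos (real m * t)"
  define S where "S = (\<Sum>j=1..m. b j * cos (real j * t))"
  define T where "T = (\<Sum>k=1..m. (b (k-1) + b (k+1) - 2*c*b k) * cos (real k * t))"
  have A: "(\<Sum>j=1..Suc m. b j * cos (real j * t)) = S + b (Suc m) * X"
    unfolding S_def X_def by (simp add: e add.commute)
  have B: "(\<Sum>k=1..Suc m. (b (k-1) + b (k+1) - 2*c*b k) * cos (real k * t)) = T + (b m + b (m+2) - 2*c*b (m+1)) * X"
    unfolding T_def X_def by (simp add: e add.commute)
  have IH: "2 * (cos t - c) * S = T + b m * X - b (m+1) * Z + b 1 - b 0 * cos t"
    using Suc.IH unfolding S_def T_def X_def Z_def by simp
  have r': "Y + Z = 2 * cos t * X" using r unfolding X_def Y_def Z_def .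
  have G: "2 * (cos t - c) * (S + b (Suc m) * X) = T + (b m + b (m+2) - 2*c*b (m+1)) * X + b (Suc m) * Y - b (Suc m + 1) * X + b 1 - b 0 * cos t"
  proof -
    have i: "m + 2 = Suc (Suc m)" "Suc m + 1 = Suc (Suc m)" "m + 1 = Suc m" by simp_all
    show ?thesis using IH r' unfolding i by algebra
  qed
  show ?case unfolding A B using G unfolding Y_def X_def by (simp add: e add.commute)
qed


primrec rr :: "real \<Rightarrow> (nat \<Rightarrow> real) \<Rightarrow> nat \<Rightarrow> nat \<Rightarrow> real \<times> real" where
  "rr c a n 0 = (0, 0)"
| "rr c a n (Suc i) = (2 * a (n - i) - snd (rr c a n i) + 2 * c * fst (rr c a n i), fst (rr c a n i))"

lemma uniq_aux:
  fixes d :: "nat \<Rightarrow> real"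
  assumes "t1 < pi" "0 < t1"
    and S: "\<And>t. cos t \<noteq> cos t1 \<Longrightarrow> (\<Sum>j=1..m. d j * sin (real j * t)) = 0"
    and C: "\<And>t. cos t \<noteq> cos t1 \<Longrightarrow> (\<Sum>j=1..m. d j * cos (real j * t)) = 0"
    and k: "k \<in> {1..m}"
  shows "d k = 0"
proof -
  define p where "p = (\<Sum>j\<in>{1..m}. monom (complex_of_real (d j)) j)"
  have root: "poly p (cis t) = 0" if "cos t \<noteq> cos t1" for t
  proof -
    have "poly p (cis t) = (\<Sum>j\<in>{1..m}. complex_of_real (d j) * cis (real j * t))"
      unfolding p_def poly_sum poly_monom Complex.DeMoivre ..
    also have "\<dots> = Complex (\<Sum>j=1..m. d j * cos (real j * t)) (\<Sum>j=1..m. d j * sin (real j * t))"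
      proof (rule complex_eqI)
      show "Re (\<Sum>j\<in>{1..m}. complex_of_real (d j) * cis (real j * t)) = Re (Complex (\<Sum>j=1..m. d j * cos (real j * t)) (\<Sum>j=1..m. d j * sin (real j * t)))"
        unfolding Re_sum complex.sel by (rule sum.cong) simp_all
      show "Im (\<Sum>j\<in>{1..m}. complex_of_real (d j) * cis (real j * t)) = Im (Complex (\<Sum>j=1..m. d j * cos (real j * t)) (\<Sum>j=1..m. d j * sin (real j * t)))"
        unfolding Im_sum complex.sel by (rule sum.cong) simp_all
    qed
    also have "\<dots> = 0" using S[OF that] C[OF that] by (simp add: complex_eq_iff)
    finally show ?thesis .
  qed
  have sub: "cis ` {t1<..<pi} \<subseteq> {x. poly p x = 0}"
  proof
    fix x assume "x \<in> cis ` {t1<..<pi}"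
    then obtain t where t: "t \<in> {t1<..<pi}" "x = cis t" by auto
    have "cos t \<noteq> cos t1"
    proof
      assume "cos t = cos t1"
      then have "t = t1" using t assms cos_inj_pi[of t t1] by auto
      then show False using t by auto
    qed
    then show "x \<in> {x. poly p x = 0}" using root t by auto
  qed
  have inj: "inj_on cis {t1<..<pi}"
  proof (rule inj_onI)
    fix x y assume xy: "x \<in> {t1<..<pi}" "y \<in> {t1<..<pi}" "cis x = cis y"
    then have "cos x = cos y" by (metis cis.sel(1))
    then show "x = y" using xy assms cos_inj_pi[of x y] by auto
  qed
  have "infinite (cis ` {t1<..<pi})"
    using inj assms by (metis finite_imageD infinite_Ioo)
  then have "infinite {x. poly p x = 0}" using sub finite_subset by blast
  then have "p = 0" using poly_roots_finite by blast
  then have "coeff p k = 0" by simp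
  moreover have "coeff p k = complex_of_real (d k)"
    unfolding p_def using k by (simp add: coeff_sum coeff_monom)
  ultimately show ?thesis by simp
qed


lemma split_last:
  fixes f :: "nat \<Rightarrow> real"
  assumes "n \<ge> 2"
  shows "(\<Sum>j=1..n. f j) = (\<Sum>j=1..n-1. f j) + f n"
proof -
  obtain m where m: "n = Suc m" using assms by (cases n) auto
  show ?thesis unfolding m using assms m by (simp add: sum.cl_ivl_Suc)
qed

theorem lemma2:
  fixes n :: nat and a :: "nat \<Rightarrow> real" and t1 :: real
  assumes "n \<ge> 2"
    and "0 < t1" and "t1 < pi"
    and "(\<Sum>j=1..n. a j * sin (real j * t1)) = 0"
  shows "\<exists>b :: nat \<Rightarrow> real.
           (\<forall>t::real.
              (\<Sum>j=1..n. a j * sin (real j * t)) =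
                (cos t - cos t1) * (\<Sum>j=1..n-1. b j * sin (real j * t)) \<and>
              (\<Sum>j=1..n. a j * cos (real j * t)) =
                - b 1 / 2 + (cos t - cos t1) * (\<Sum>j=1..n-1. b j * cos (real j * t)))
         \<and> (\<forall>b' :: nat \<Rightarrow> real.
              (\<forall>t::real.
                 (\<Sum>j=1..n. a j * sin (real j * t)) =
                   (cos t - cos t1) * (\<Sum>j=1..n-1. b' j * sin (real j * t)) \<and>
                 (\<Sum>j=1..n. a j * cos (real j * t)) =
                   - b' 1 / 2 + (cos t - cos t1) * (\<Sum>j=1..n-1. b' j * cos (real j * t)))
              \<longrightarrow> (\<forall>j\<in>{1..n-1}. b' j = b j))"
proof -
  define c where "c = cos t1"
  define b where "b j = (if 0 < j \<and> j < n then fst (rr c a n (n - j)) else 0)" for j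
  define e where "e k = b (k-1) + b (k+1) - 2*c*b k" for k
  have b0: "b 0 = 0" and bn: "b n = 0" unfolding b_def by simp_all
  have bn1: "b (n-1) = 2 * a n"
  proof -
    have "n - (n-1) = Suc 0" using assms(1) by simp
    then show ?thesis unfolding b_def using assms(1) by simp
  qed
  have e2: "e k = 2 * a k" if k: "2 \<le> k" "k \<le> n-1" for k
  proof -
    have s1: "n - (k-1) = Suc (n - k)" using k by simp
    have bk1: "b (k-1) = 2 * a k - snd (rr c a n (n-k)) + 2*c*fst (rr c a n (n-k))"
      unfolding b_def using k s1 by simp
    have bk: "b k = fst (rr c a n (n-k))" unfolding b_def using k by simp
    have s2: "n - k = Suc (n - (k+1))" using k by simp
    have sn: "snd (rr c a n (n-k)) = fst (rr c a n (n-(k+1)))" unfolding s2 by simp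
    have bk2: "b (k+1) = fst (rr c a n (n-(k+1)))"
    proof (cases "k+1 < n")
      case True then show ?thesis unfolding b_def by simp
    next
      case False
      then have "n - (k+1) = 0" by simp
      then show ?thesis unfolding b_def using False by simp
    qed
    show ?thesis unfolding e_def bk1 bk bk2 sn by simp
  qed
  have nn: "real (n-1) + 1 = real n" using assms(1) by simp
  have sinE: "2 * (cos t - c) * (\<Sum>j=1..n-1. b j * sin (real j * t)) =
      (\<Sum>k=1..n-1. e k * sin (real k * t)) + b (n-1) * sin (real n * t)" for t
    using sin_expand[where t=t and c=c and m="n-1" and b=b] unfolding e_def nn using b0 bn assms(1) by simp
  have cosE: "2 * (cos t - c) * (\<Sum>j=1..n-1. b j * cos (real j * t)) =
      (\<Sum>k=1..n-1. e k * cos (real k * t)) + b (n-1) * cos (real n * t) + b 1" for t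
    using cos_expand[where t=t and c=c and m="n-1" and b=b] unfolding e_def nn using b0 bn assms(1) by simp
  define D where "D = e 1 - 2 * a 1"
  have esplit: "e k = 2 * a k + (if k = 1 then D else 0)" if "k \<in> {1..n-1}" for k
    using that e2[of k] unfolding D_def by (cases "k = 1") auto
  have sumsplit: "(\<Sum>k=1..n-1. e k * f (real k * t)) = 2 * (\<Sum>k=1..n-1. a k * f (real k * t)) + D * f t"
    for f :: "real \<Rightarrow> real" and t
  proof -
    have "(\<Sum>k=1..n-1. e k * f (real k * t)) = (\<Sum>k=1..n-1. 2 * (a k * f (real k * t)) + (if k = 1 then D * f (real k * t) else 0))"
      by (rule sum.cong) (auto simp: esplit algebra_simps)
    also have "\<dots> = 2 * (\<Sum>k=1..n-1. a k * f (real k * t)) + D * f t"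
      using assms(1) by (simp add: sum.distrib sum_distrib_left)
    finally show ?thesis .
  qed
  have Sid: "2 * (cos t - c) * (\<Sum>j=1..n-1. b j * sin (real j * t)) = 2 * (\<Sum>j=1..n. a j * sin (real j * t)) + D * sin t" for t
    using sinE[of t] sumsplit[of sin t] split_last[OF assms(1), of "\<lambda>j. a j * sin (real j * t)"] bn1
    by (simp add: algebra_simps)
  have "D * sin t1 = 0" using Sid[of t1] assms(4) unfolding c_def by simp
  moreover have "sin t1 > 0" using assms(2,3) by (rule sin_gt_zero)
  ultimately have D0: "D = 0" by simp
  have Cid: "2 * (cos t - c) * (\<Sum>j=1..n-1. b j * cos (real j * t)) = 2 * (\<Sum>j=1..n. a j * cos (real j * t)) + b 1" for t
    using cosE[of t] sumsplit[of cos t] split_last[OF assms(1), of "\<lambda>j. a j * cos (real j * t)"] bn1 D0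
    by (simp add: algebra_simps)
  have exist: "\<forall>t::real.
              (\<Sum>j=1..n. a j * sin (real j * t)) =
                (cos t - cos t1) * (\<Sum>j=1..n-1. b j * sin (real j * t)) \<and>
              (\<Sum>j=1..n. a j * cos (real j * t)) =
                - b 1 / 2 + (cos t - cos t1) * (\<Sum>j=1..n-1. b j * cos (real j * t))"
  proof
    fix t
    show "(\<Sum>j=1..n. a j * sin (real j * t)) =
                (cos t - cos t1) * (\<Sum>j=1..n-1. b j * sin (real j * t)) \<and>
              (\<Sum>j=1..n. a j * cos (real j * t)) =
                - b 1 / 2 + (cos t - cos t1) * (\<Sum>j=1..n-1. b j * cos (real j * t))"
      using Sid[of t] Cid[of t] D0 unfolding c_def by (simp add: algebra_simps)
  qed
  have uniq: "\<forall>j\<in>{1..n-1}. b' j = b j" if H: "\<forall>t::real.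
                 (\<Sum>j=1..n. a j * sin (real j * t)) =
                   (cos t - cos t1) * (\<Sum>j=1..n-1. b' j * sin (real j * t)) \<and>
                 (\<Sum>j=1..n. a j * cos (real j * t)) =
                   - b' 1 / 2 + (cos t - cos t1) * (\<Sum>j=1..n-1. b' j * cos (real j * t))" for b'
  proof
    fix k assume k: "k \<in> {1..n-1}"
    define d where "d j = b j - b' j" for j
    have hs: "(cos t - cos t1) * (\<Sum>j=1..n-1. d j * sin (real j * t)) = 0" for t
      using spec[OF exist, of t] spec[OF H, of t]
      unfolding d_def by (simp add: left_diff_distrib sum_subtractf right_diff_distrib)
    have hc: "- b 1 / 2 + (cos t - cos t1) * (\<Sum>j=1..n-1. b j * cos (real j * t)) = - b' 1 / 2 + (cos t - cos t1) * (\<Sum>j=1..n-1. b' j * cos (real j * t))" for t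
      using spec[OF exist, of t] spec[OF H, of t] by simp
    have b11: "b' 1 = b 1" using hc[of t1] by simp
    have hc2: "(cos t - cos t1) * (\<Sum>j=1..n-1. d j * cos (real j * t)) = 0" for t
      using hc[of t] b11
      unfolding d_def by (simp add: left_diff_distrib sum_subtractf right_diff_distrib)
    have "d k = 0"
      by (rule uniq_aux[where d=d and m="n-1" and ?t1.0=t1 and k=k]) (use assms(2,3) hs hc2 k in auto)
    then show "b' k = b k" unfolding d_def by simp
  qed
  show ?thesis using exist uniq by blast
qed

end
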